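(* Let $\mathcal{A}$ be a finite totally ordered alphabet. The monoid $\mathbf{Ch}(\mathcal{A},2)$ is $\mathscr{J}$-trivial, i.e. for $x,y\in\mathbf{Ch}(\mathcal{A},2)$, if $\mathbf{Ch}(\mathcal{A},2)\,x\,\mathbf{Ch}(\mathcal{A},2)=\mathbf{Ch}(\mathcal{A},2)\,y\,\mathbf{Ch}(\mathcal{A},2)$ then $x=y$.
   Context: The Chinese monoid $\mathbf{Ch}(\mathcal{A})$ is the quotient of the free monoid $\mathcal{A}^*$ by the relations $cba=cab=bca$ for $a<b<c$, and $aba=baa$, $bba=bab$ for $a<b$ ($a,b,c\in\mathcal{A}$). $\mathbf{Ch}(\mathcal{A},2)$ is the quotient of $\mathbf{Ch}(\mathcal{A})$ obtained by adding the relations $a^2=a$ for every $a\in\mathcal{A}$. *)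

theory Defs
  imports Main
begin

inductive chrel2 :: "'a::linorder list \<Rightarrow> 'a list \<Rightarrow> bool" where
  r1: "a < b \<Longrightarrow> b < c \<Longrightarrow> chrel2 [c,b,a] [c,a,b]"
| r2: "a < b \<Longrightarrow> b < c \<Longrightarrow> chrel2 [c,a,b] [b,c,a]"
| r3: "a < b \<Longrightarrow> chrel2 [a,b,a] [b,a,a]"
| r4: "a < b \<Longrightarrow> chrel2 [b,b,a] [b,a,b]"
| r5: "chrel2 [a,a] [a]"

inductive ch2_eq :: "'a::linorder list \<Rightarrow> 'a list \<Rightarrow> bool" where
  step: "chrel2 l r \<Longrightarrow> ch2_eq (u @ l @ v) (u @ r @ v)"
| refl: "ch2_eq w w"
| sym: "ch2_eq w w' \<Longrightarrow> ch2_eq w' w"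
| trans: "ch2_eq w1 w2 \<Longrightarrow> ch2_eq w2 w3 \<Longrightarrow> ch2_eq w1 w3"

text \<open>Elements of Ch(A,2) are represented by words; two words represent the same
  element iff they are ch2_eq. The two-sided ideal M x M equals M y M iff
  x \<in> M y M and y \<in> M x M.\<close>

definition ch2_J_equiv :: "'a::linorder list \<Rightarrow> 'a list \<Rightarrow> bool" where
  "ch2_J_equiv x y \<longleftrightarrow>
     (\<exists>u v. ch2_eq x (u @ y @ v)) \<and> (\<exists>u v. ch2_eq y (u @ x @ v))"

end

theory Submission
  imports Defs
begin

declare ch2_eq.trans[trans]

lemma ch2_cong: "ch2_eq a b \<Longrightarrow> ch2_eq (u@a@v) (u@b@v)"
proof (induction arbitrary: u v rule: ch2_eq.induct)
  case (step l r u0 v0)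
  show ?case using ch2_eq.step[OF step(1), of "u@u0" "v0@v"] by simp
next
  case (refl w) then show ?case by (rule ch2_eq.refl)
next
  case (sym w w') then show ?case by (blast intro: ch2_eq.sym)
next
  case (trans w1 w2 w3) then show ?case by (blast intro: ch2_eq.trans)
qed

lemma congI: "ch2_eq a b \<Longrightarrow> u@a@v = s \<Longrightarrow> u@b@v = t \<Longrightarrow> ch2_eq s t"
  using ch2_cong by blast

lemma stepI: "chrel2 l r \<Longrightarrow> u@l@v = s \<Longrightarrow> u@r@v = t \<Longrightarrow> ch2_eq s t"
  using ch2_eq.step by blast

lemma MW: "\<forall>c\<in>set w. c < m \<Longrightarrow> w \<noteq> [] \<Longrightarrow> \<exists>z c. c < m \<and> ch2_eq (m#w) (z@[m,c])"
proof (induction w rule: rev_induct)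
  case Nil then show ?case by simp
next
  case (snoc a w0)
  show ?case
  proof (cases "w0 = []")
    case True
    then show ?thesis using snoc.prems by (auto intro!: exI[of _ "[]"] ch2_eq.refl)
  next
    case False
    then obtain z c where c: "c < m" and h: "ch2_eq (m#w0) (z@[m,c])" using snoc by auto
    have am: "a < m" using snoc.prems by auto
    have h2: "ch2_eq (m#w0@[a]) (z@[m,c,a])"
      by (rule congI[OF h, of "[]" "[a]"]) auto
    consider "c > a" | "c < a" | "c = a" by fastforce
    then show ?thesis
    proof cases
      case 1
      have "ch2_eq (z@[m,c,a]) (z@[m,a,c])"
        by (rule stepI[of _ _ z "[]"]) (auto intro: chrel2.intros 1 c)
      also have "ch2_eq (z@[m,a,c]) ((z@[c])@[m,a])"
        by (rule stepI[of _ _ z "[]"]) (auto intro: chrel2.intros 1 c)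
      finally show ?thesis using h2 am by (blast intro: ch2_eq.trans)
    next
      case 2
      have "ch2_eq (z@[m,c,a]) ((z@[a])@[m,c])"
        by (rule stepI[of _ _ z "[]"]) (auto intro: chrel2.intros 2 am)
      then show ?thesis using h2 c by (blast intro: ch2_eq.trans)
    next
      case 3
      have "ch2_eq (z@[m,c,a]) (z@[m,c])"
        by (rule stepI[of "[a,a]" "[a]" "z@[m]" "[]"]) (auto intro: chrel2.intros simp: 3)
      then show ?thesis using h2 c by (blast intro: ch2_eq.trans)
    qed
  qed
qed

lemma mwm: "\<forall>c\<in>set w. c < m \<Longrightarrow> ch2_eq (m#w@[m]) (m#w)"
proof (cases "w = []")
  case True
  then show ?thesis by (auto intro!: stepI[of "[m,m]" "[m]" "[]" "[]"] chrel2.intros)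
next
  case False
  assume a: "\<forall>c\<in>set w. c < m"
  obtain z c where c: "c < m" and h: "ch2_eq (m#w) (z@[m,c])" using MW[OF a False] by auto
  have "ch2_eq (m#w@[m]) (z@[m,c,m])" by (rule congI[OF h, of "[]" "[m]"]) auto
  also have "ch2_eq (z@[m,c,m]) (z@[m,m,c])"
    by (rule ch2_eq.sym, rule stepI[of _ _ z "[]"]) (auto intro: chrel2.intros c)
  also have "ch2_eq (z@[m,m,c]) (z@[m,c])"
    by (rule stepI[of "[m,m]" "[m]" z "[c]"]) (auto intro: chrel2.intros)
  also have "ch2_eq (z@[m,c]) (m#w)" using h by (rule ch2_eq.sym)
  finally show ?thesis .
qed

lemma lemM: "\<forall>c\<in>set u. c \<le> m \<Longrightarrow> ch2_eq (m#u) (m # filter (\<lambda>x. x\<noteq>m) u)"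
proof (induction u rule: rev_induct)
  case Nil then show ?case by (simp add: ch2_eq.refl)
next
  case (snoc a u0)
  have IH: "ch2_eq (m#u0) (m # filter (\<lambda>x. x\<noteq>m) u0)" using snoc by auto
  have h: "ch2_eq (m#u0@[a]) (m # filter (\<lambda>x. x\<noteq>m) u0 @ [a])"
    by (rule congI[OF IH, of "[]" "[a]"]) auto
  show ?case
  proof (cases "a = m")
    case False then show ?thesis using h by simp
  next
    case True
    have lt: "\<forall>c\<in>set (filter (\<lambda>x. x\<noteq>m) u0). c < m" using snoc.prems by force
    show ?thesis using h mwm[OF lt] True by (auto intro: ch2_eq.trans)
  qed
qed

lemma absorb: "sorted_wrt (>) ds \<Longrightarrow> a \<in> set ds \<Longrightarrow> ch2_eq (ds@[a]) ds \<and> ch2_eq (a#ds) ds"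
proof (induction ds)
  case Nil then show ?case by simp
next
  case (Cons m ds')
  have lt: "\<forall>c\<in>set ds'. c < m" using Cons.prems by auto
  have s: "sorted_wrt (>) ds'" using Cons.prems by auto
  show ?case
  proof (cases "a = m")
    case True
    have 1: "ch2_eq ((m#ds')@[a]) (m#ds')" using mwm[OF lt] True by simp
    have 2: "ch2_eq (a#m#ds') (m#ds')"
      by (rule stepI[of "[m,m]" "[m]" "[]" ds']) (auto intro: chrel2.intros simp: True)
    show ?thesis using 1 2 by simp
  next
    case False
    then have ain: "a \<in> set ds'" using Cons.prems by auto
    have am: "a < m" using lt ain by auto
    from Cons.IH[OF s ain] have R: "ch2_eq (ds'@[a]) ds'" and L: "ch2_eq (a#ds') ds'" by auto
    have 1: "ch2_eq ((m#ds')@[a]) (m#ds')" by (rule congI[OF R, of "[m]" "[]"]) auto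
    have "ch2_eq (a#m#ds') (a#m#a#ds')" by (rule congI[OF ch2_eq.sym[OF L], of "[a,m]" "[]"]) auto
    also have "ch2_eq (a#m#a#ds') (m#a#a#ds')"
      by (rule stepI[of _ _ "[]" ds']) (auto intro: chrel2.intros am)
    also have "ch2_eq (m#a#a#ds') (m#a#ds')"
      by (rule stepI[of "[a,a]" "[a]" "[m]" ds']) (auto intro: chrel2.intros)
    also have "ch2_eq (m#a#ds') (m#ds')" by (rule congI[OF L, of "[m]" "[]"]) auto
    finally show ?thesis using 1 by simp
  qed
qed

lemma absorbL: "sorted_wrt (>) ds \<Longrightarrow> set u \<subseteq> set ds \<Longrightarrow> ch2_eq (u@ds) ds"
proof (induction u)
  case Nil then show ?case by (simp add: ch2_eq.refl)
next
  case (Cons a u)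
  have IH: "ch2_eq (u@ds) ds" using Cons by auto
  have "ch2_eq (a#u@ds) (a#ds)" using congI[OF IH, of "[a]" "[]"] by simp
  also have "ch2_eq (a#ds) ds" using absorb Cons.prems by auto
  finally show ?case by simp
qed

lemma absorbR: "sorted_wrt (>) ds \<Longrightarrow> set u \<subseteq> set ds \<Longrightarrow> ch2_eq (ds@u) ds"
proof (induction u rule: rev_induct)
  case Nil then show ?case by (simp add: ch2_eq.refl)
next
  case (snoc a u)
  have IH: "ch2_eq (ds@u) ds" using snoc by auto
  have "ch2_eq (ds@u@[a]) (ds@[a])" using congI[OF IH, of "[]" "[a]"] by simp
  also have "ch2_eq (ds@[a]) ds" using absorb snoc.prems by auto
  finally show ?case by simp
qed

lemma powA: "sorted_wrt (>) ds \<Longrightarrow> set ds = set w \<Longrightarrow>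
  \<exists>N. \<forall>n\<ge>N. ch2_eq (concat (replicate n w)) ds"
proof (induction ds arbitrary: w)
  case Nil then show ?case by (auto intro: ch2_eq.refl)
next
  case (Cons m ds')
  have lt: "\<forall>c\<in>set ds'. c < m" and s: "sorted_wrt (>) ds'" using Cons.prems by auto
  have "m \<in> set w" using Cons.prems by auto
  then obtain s0 t where w: "w = s0 @ m # t" and ms: "m \<notin> set s0" by (meson split_list_first)
  define t' where "t' = filter (\<lambda>x. x\<noteq>m) t"
  define w' where "w' = s0 @ t'"
  have mnot: "m \<notin> set ds'" using lt by auto
  have sw': "set ds' = set w'"
  proof -
    have "set w' = set w - {m}" using ms unfolding w'_def t'_def w by auto
    also have "\<dots> = set ds'" using Cons.prems(2)[symmetric] mnot by auto
    finally show ?thesis by simp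
  qed
  obtain N where N: "\<forall>n\<ge>N. ch2_eq (concat (replicate n w')) ds'" using Cons.IH[OF s sw'] by blast
  have le: "\<forall>c\<in>set w. c \<le> m"
  proof
    fix c assume "c \<in> set w"
    hence "c \<in> set (m#ds')" using Cons.prems(2) by simp
    thus "c \<le> m" using lt by auto
  qed
  have "\<forall>n\<ge>Suc N. ch2_eq (concat (replicate n w)) (m#ds')"
  proof (intro allI impI)
    fix n assume "Suc N \<le> n"
    then obtain k where n: "n = Suc k" and k: "k \<ge> N" by (cases n) auto
    have fw: "filter (\<lambda>x. x\<noteq>m) w = w'" using ms unfolding w w'_def t'_def
      by (auto simp: filter_id_conv)
    have f: "filter (\<lambda>x. x\<noteq>m) (t @ concat (replicate k w)) = t' @ concat (replicate k w')"
      unfolding t'_def by (simp add: filter_concat fw[symmetric] map_replicate)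
    have le2: "\<forall>c\<in>set (t @ concat (replicate k w)). c \<le> m" using le w by auto
    have "ch2_eq (concat (replicate n w)) (s0 @ (m # t' @ concat (replicate k w')) @ [])"
      using congI[OF lemM[OF le2], of s0 "[]"] f n w by simp
    also have "ch2_eq (s0 @ (m # t' @ concat (replicate k w')) @ []) (s0 @ m # t' @ ds')"
      using congI[OF N[rule_format, OF k], of "s0 @ m # t'" "[]"] by simp
    also have "ch2_eq (s0 @ m # t' @ ds') (s0 @ m # ds')"
    proof -
      have "set t' \<subseteq> set ds'" using sw' unfolding w'_def by auto
      then show ?thesis using congI[OF absorbL[OF s], of t' "s0 @ [m]" "[]"] by simp
    qed
    also have "ch2_eq (s0 @ m # ds') (m # ds')"
      using absorbL[OF Cons.prems(1), of s0] Cons.prems(2) w by auto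
    finally show "ch2_eq (concat (replicate n w)) (m#ds')" .
  qed
  then show ?case by blast
qed

lemma rep_comm: "concat (replicate n q) @ q = q @ concat (replicate n q)"
  by (induction n) auto

theorem mainTheorem3:
  fixes x y :: "'a::{linorder,finite} list"
  assumes "ch2_J_equiv x y"
  shows "ch2_eq x y"
proof -
  obtain u v u' v' where h1: "ch2_eq x (u@y@v)" and h2: "ch2_eq y (u'@x@v')"
    using assms unfolding ch2_J_equiv_def by blast
  define p where "p = u@u'"
  define q where "q = v'@v"
  have xpq: "ch2_eq x (p@x@q)"
  proof -
    have "ch2_eq (u@y@v) (p@x@q)" using congI[OF h2, of u v] unfolding p_def q_def by simp
    then show ?thesis using ch2_eq.trans[OF h1] by blast
  qed
  have pw: "ch2_eq x (concat (replicate n p) @ x @ concat (replicate n q))" for n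
  proof (induction n)
    case 0 then show ?case by (simp add: ch2_eq.refl)
  next
    case (Suc n)
    have "ch2_eq (p@x@q) (p @ (concat (replicate n p) @ x @ concat (replicate n q)) @ q)"
      using congI[OF Suc, of p q] by simp
    then have "ch2_eq x (p @ (concat (replicate n p) @ x @ concat (replicate n q)) @ q)"
      using ch2_eq.trans[OF xpq] by blast
    then show ?case using rep_comm[of n q] by simp
  qed
  define dp where "dp = rev (sorted_list_of_set (set p))"
  define dq where "dq = rev (sorted_list_of_set (set q))"
  have sdp: "sorted_wrt (>) dp" "set dp = set p" unfolding dp_def
    by (auto simp: sorted_wrt_rev)
  have sdq: "sorted_wrt (>) dq" "set dq = set q" unfolding dq_def
    by (auto simp: sorted_wrt_rev)
  obtain N1 where N1: "\<forall>n\<ge>N1. ch2_eq (concat (replicate n p)) dp" using powA[OF sdp] by blast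
  obtain N2 where N2: "\<forall>n\<ge>N2. ch2_eq (concat (replicate n q)) dq" using powA[OF sdq] by blast
  define n where "n = max N1 N2"
  have P: "ch2_eq (concat (replicate n p)) dp" and Q: "ch2_eq (concat (replicate n q)) dq"
    using N1 N2 unfolding n_def by auto
  have "ch2_eq x (concat (replicate n p) @ x @ concat (replicate n q))" by (rule pw)
  also have "ch2_eq (concat (replicate n p) @ x @ concat (replicate n q)) (dp @ x @ concat (replicate n q))"
    using congI[OF P, of "[]" "x @ concat (replicate n q)"] by simp
  also have "ch2_eq (dp @ x @ concat (replicate n q)) (dp @ x @ dq)"
    using congI[OF Q, of "dp @ x" "[]"] by simp
  finally have xd: "ch2_eq x (dp @ x @ dq)" .
  have "ch2_eq y (u'@x@v')" by (rule h2)
  also have "ch2_eq (u'@x@v') (u' @ (dp @ x @ dq) @ v')" using congI[OF xd, of u' v'] by simp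
  also have "ch2_eq (u' @ (dp @ x @ dq) @ v') (dp @ (x @ dq) @ v')"
    using congI[OF absorbL[OF sdp(1), of u'], of "[]" "(x @ dq) @ v'"] sdp(2)
    unfolding p_def by auto
  also have "ch2_eq (dp @ (x @ dq) @ v') ((dp @ x) @ dq @ [])"
    using congI[OF absorbR[OF sdq(1), of v'], of "dp @ x" "[]"] sdq(2)
    unfolding q_def by auto
  also have "ch2_eq ((dp @ x) @ dq @ []) x" using ch2_eq.sym[OF xd] by simp
  finally show ?thesis by (rule ch2_eq.sym)
qed

end
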